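(* Let $G$ be a connected graph on $n\ge 2$ vertices and let $\partial_1(G)$ be the spectral radius (largest eigenvalue) of its distance matrix $D(G)$. Then $\gamma(G)\le \dfrac{n}{\partial_1(G)}$, with equality if and only if $G$ is transmission-regular.
   Context: For a finite simple undirected graph $G$ with $n$ vertices, let $\mathcal{F}=\{x\in\mathbb{R}^{V(G)} : \sum_{v} x_v = 0,\ \|x\|_\infty = 1\}$, for $x\in\mathcal{F}$ let $\gamma_x(G)=\max_{uv\in E(G)}|x_u-x_v|$, and $\gamma(G)=\min_{x\in\mathcal{F}}\gamma_x(G)$. For a connected graph, the distance matrix $D(G)$ has $(u,v)$-entry the shortest-path distance $d(u,v)$; the transmission of $u$ is $\operatorname{tr}(u)=\sum_v d(u,v)$; $G$ is transmission-regular if all vertices have the same transmission. *)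

theory Defs
  imports "HOL-Analysis.Analysis"
begin

definition simple_graph :: "('n::finite \<Rightarrow> 'n \<Rightarrow> bool) \<Rightarrow> bool" where
  "simple_graph E \<longleftrightarrow> (\<forall>u v. E u v \<longrightarrow> E v u) \<and> (\<forall>u. \<not> E u u)"

definition connected_graph :: "('n::finite \<Rightarrow> 'n \<Rightarrow> bool) \<Rightarrow> bool" where
  "connected_graph E \<longleftrightarrow> (\<forall>u v. \<exists>k. (E ^^ k) u v)"

definition gdist :: "('n::finite \<Rightarrow> 'n \<Rightarrow> bool) \<Rightarrow> 'n \<Rightarrow> 'n \<Rightarrow> nat" where
  "gdist E u v = (LEAST k. (E ^^ k) u v)"

definition distance_matrix :: "('n::finite \<Rightarrow> 'n \<Rightarrow> bool) \<Rightarrow> real^'n^'n" where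
  "distance_matrix E = (\<chi> u v. real (gdist E u v))"

definition dist_spectral_radius :: "('n::finite \<Rightarrow> 'n \<Rightarrow> bool) \<Rightarrow> real" where
  "dist_spectral_radius E =
     Max {\<mu>. \<exists>x::real^'n. x \<noteq> 0 \<and> distance_matrix E *v x = \<mu> *\<^sub>R x}"

definition transmission :: "('n::finite \<Rightarrow> 'n \<Rightarrow> bool) \<Rightarrow> 'n \<Rightarrow> nat" where
  "transmission E u = (\<Sum>v\<in>UNIV. gdist E u v)"

definition transmission_regular :: "('n::finite \<Rightarrow> 'n \<Rightarrow> bool) \<Rightarrow> bool" where
  "transmission_regular E \<longleftrightarrow> (\<forall>u v. transmission E u = transmission E v)"

definition sup_norm :: "('n::finite \<Rightarrow> real) \<Rightarrow> real" where
  "sup_norm x = Max (range (\<lambda>v. \<bar>x v\<bar>))"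

definition feasible_vectors :: "('n::finite \<Rightarrow> real) set" where
  "feasible_vectors = {x. (\<Sum>v\<in>UNIV. x v) = 0 \<and> sup_norm x = 1}"

definition gamma_x :: "('n::finite \<Rightarrow> 'n \<Rightarrow> bool) \<Rightarrow> ('n \<Rightarrow> real) \<Rightarrow> real" where
  "gamma_x E x = Max {\<bar>x u - x v\<bar> | u v. E u v}"

text \<open>The minimum over the feasible set (attained by compactness), written as an infimum.\<close>

definition gamma :: "('n::finite \<Rightarrow> 'n \<Rightarrow> bool) \<Rightarrow> real" where
  "gamma E = Inf (gamma_x E ` feasible_vectors)"

end

theory Submission
  imports Defs
begin

lemma walk_sym:
  assumes "simple_graph E" "(E ^^ k) a b" shows "(E ^^ k) b a"
  using assms(2)
proof (induction k arbitrary: a b)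
  case 0 then show ?case by simp
next
  case (Suc k)
  then obtain y where "E a y" "(E ^^ k) y b" using relpowp_Suc_D2 by metis
  then have "(E ^^ k) b y" using Suc.IH by blast
  moreover have "E y a" using \<open>E a y\<close> assms(1) unfolding simple_graph_def by blast
  ultimately show ?case by (rule relpowp_Suc_I)
qed

lemma walk_trans:
  assumes "(E ^^ m) a b" "(E ^^ k) b c" shows "(E ^^ (m + k)) a c"
  using assms(2)
proof (induction k arbitrary: c)
  case 0 then show ?case using assms(1) by simp
next
  case (Suc k)
  then obtain y where "(E ^^ k) b y" "E y c" using relpowp_Suc_E by metis
  then have "(E ^^ Suc (m + k)) a c" using Suc.IH by (meson relpowp_Suc_I)
  then show ?case by simp
qed

lemma gdist_walk:
  assumes "connected_graph E" shows "(E ^^ gdist E a b) a b"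
  unfolding gdist_def using assms unfolding connected_graph_def by (meson LeastI_ex)

lemma gdist_le:
  assumes "(E ^^ k) a b" shows "gdist E a b \<le> k"
  unfolding gdist_def using assms by (rule Least_le)

lemma gdist_self [simp]: "gdist E a a = 0"
  using gdist_le[where E=E and k=0 and a=a and b=a] by simp

lemma gdist_pos:
  assumes "connected_graph E" "a \<noteq> b" shows "gdist E a b \<ge> 1"
proof (rule ccontr)
  assume "\<not> ?thesis"
  then have "gdist E a b = 0" by simp
  then have "(E ^^ 0) a b" using gdist_walk[OF assms(1), of a b] by simp
  then show False using assms(2) by simp
qed

lemma gdist_sym:
  assumes "simple_graph E" "connected_graph E" shows "gdist E a b = gdist E b a"
  using gdist_le[OF walk_sym[OF assms(1) gdist_walk[OF assms(2), of a b]]]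
        gdist_le[OF walk_sym[OF assms(1) gdist_walk[OF assms(2), of b a]]] by simp

lemma gdist_tri:
  assumes "connected_graph E" shows "gdist E a c \<le> gdist E a b + gdist E b c"
  using gdist_le[OF walk_trans[OF gdist_walk[OF assms, of a b] gdist_walk[OF assms, of b c]]] .

lemma gdist_edge:
  assumes "simple_graph E" "connected_graph E" "E b c"
  shows "gdist E a c \<le> gdist E a b + 1" "gdist E a b \<le> gdist E a c + 1"
proof -
  have "gdist E b c \<le> 1" using gdist_le[where E=E and k=1 and a=b and b=c] assms(3) relpowp_1 by metis
  then show "gdist E a c \<le> gdist E a b + 1" using gdist_tri[OF assms(2), of a c b]
      gdist_tri[OF assms(2), of a b c] by simp
  have "E c b" using assms(1,3) unfolding simple_graph_def by blast
  then have "gdist E c b \<le> 1" using gdist_le[where E=E and k=1 and a=c and b=b] relpowp_1 by metis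
  then show "gdist E a b \<le> gdist E a c + 1" using gdist_tri[OF assms(2), of a b c] by simp
qed

lemma walk_lip:
  fixes x :: "'a \<Rightarrow> real"
  assumes "\<And>a b. E a b \<Longrightarrow> \<bar>x a - x b\<bar> \<le> g" "(E ^^ k) a b"
  shows "\<bar>x a - x b\<bar> \<le> real k * g"
  using assms(2)
proof (induction k arbitrary: b)
  case 0 then show ?case by simp
next
  case (Suc k)
  then obtain y where "(E ^^ k) a y" "E y b" using relpowp_Suc_E by metis
  then have "\<bar>x a - x y\<bar> \<le> real k * g" "\<bar>x y - x b\<bar> \<le> g" using Suc.IH assms(1) by auto
  then show ?case by (simp add: algebra_simps)
qed

lemma sym_dot:
  fixes A :: "real^'n^'n"
  assumes sym: "\<And>i j. A$i$j = A$j$i"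
  shows "(A *v y) \<bullet> z = y \<bullet> (A *v z)"
proof -
  have "transpose A = A" using sym by (simp add: vec_eq_iff transpose_def)
  then have "A *v y = y v* A" by (metis transpose_matrix_vector)
  then show ?thesis by (simp add: dot_lmul_matrix)
qed

lemma quad_nonneg_zero:
  fixes a b :: real
  assumes "\<And>t. 0 \<le> 2 * t * a + t^2 * b" "b \<ge> 0"
  shows "a = 0"
proof (rule ccontr)
  assume "a \<noteq> 0"
  define t where "t = - a / (b + 1)"
  have c: "b + 1 \<noteq> 0" using assms(2) by simp
  have at: "a = - t * (b + 1)" using c by (simp add: t_def)
  then have "t \<noteq> 0" using \<open>a \<noteq> 0\<close> by auto
  have "0 \<le> 2 * t * a + t^2 * b" using assms(1) .
  also have "2 * t * a + t^2 * b = t^2 * (- b - 2)"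
    unfolding at by (simp add: power2_eq_square algebra_simps)
  also have "\<dots> < 0" using \<open>t \<noteq> 0\<close> assms(2)
    by (intro mult_pos_neg) auto
  finally show False by simp
qed

lemma sym_max_eig:
  fixes A :: "real^'n^'n"
  assumes sym: "\<And>i j. A$i$j = A$j$i"
  obtains l x where "x \<noteq> 0" "A *v x = l *\<^sub>R x" "\<And>y. y \<bullet> (A *v y) \<le> l * (norm y)^2"
proof -
  define f where "f y = y \<bullet> (A *v y)" for y :: "real^'n"
  have cont: "continuous_on (sphere 0 1) f"
    unfolding f_def by (intro continuous_intros matrix_vector_mult_linear_continuous_on)
  have "sphere (0::real^'n) 1 \<noteq> {}" by simp
  then obtain x0 where x0: "x0 \<in> sphere 0 1" "\<And>y. y \<in> sphere 0 1 \<Longrightarrow> f y \<le> f x0"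
    using continuous_attains_sup[OF compact_sphere _ cont] by blast
  define l where "l = f x0"
  have nx0: "norm x0 = 1" using x0(1) by simp
  have bound: "f y \<le> l * (norm y)^2" for y
  proof (cases "y = 0")
    case True then show ?thesis by (simp add: f_def)
  next
    case False
    then have ny: "norm y > 0" by simp
    have "f ((1 / norm y) *\<^sub>R y) \<le> l" unfolding l_def using x0(2) ny by simp
    moreover have "f ((1 / norm y) *\<^sub>R y) = f y / (norm y)^2"
      by (simp add: f_def matrix_vector_mult_scaleR power2_eq_square)
    ultimately show ?thesis using ny by (simp add: field_simps)
  qed
  define q where "q y = l * (norm y)^2 - f y" for y
  have qnn: "q y \<ge> 0" for y using bound[of y] by (simp add: q_def)
  have qx0: "q x0 = 0" using nx0 by (simp add: q_def l_def)
  define r where "r = l *\<^sub>R x0 - A *v x0"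
  have expand: "q (x0 + t *\<^sub>R r) = q x0 + 2 * t * (r \<bullet> r) + t^2 * q r" for t
  proof -
    have s1: "x0 \<bullet> (A *v r) = (A *v x0) \<bullet> r" using sym_dot[OF sym] by simp
    have rr: "r \<bullet> r = l * (x0 \<bullet> r) - (A *v x0) \<bullet> r" by (simp add: r_def inner_diff_left)
    have e1: "(x0 + t *\<^sub>R r) \<bullet> (x0 + t *\<^sub>R r) = x0 \<bullet> x0 + 2 * t * (x0 \<bullet> r) + t^2 * (r \<bullet> r)"
      by (simp add: inner_add_left inner_add_right inner_commute power2_eq_square algebra_simps)
    have e2: "(x0 + t *\<^sub>R r) \<bullet> (A *v (x0 + t *\<^sub>R r)) = x0 \<bullet> (A *v x0) + t * (x0 \<bullet> (A *v r)) + t * (r \<bullet> (A *v x0)) + t^2 * (r \<bullet> (A *v r))"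
      by (simp add: matrix_vector_right_distrib matrix_vector_mult_scaleR inner_add_left inner_add_right power2_eq_square algebra_simps)
    show ?thesis unfolding q_def f_def power2_norm_eq_inner e1 e2 s1 rr by (simp add: inner_commute algebra_simps)
  qed
  have "r \<bullet> r = 0"
  proof (rule quad_nonneg_zero[OF _ qnn])
    fix t
    show "0 \<le> 2 * t * (r \<bullet> r) + t^2 * q r" using qnn[of "x0 + t *\<^sub>R r"] expand[of t] qx0 by simp
  qed
  then have "r = 0" by simp
  then have ev: "A *v x0 = l *\<^sub>R x0" by (simp add: r_def)
  have nz: "x0 \<noteq> 0" using nx0 by auto
  have b2: "\<And>y. y \<bullet> (A *v y) \<le> l * (norm y)^2" using bound by (simp only: f_def)
  show ?thesis by (rule that[OF nz ev b2])
qed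

lemma sym_eig_finite:
  fixes A :: "real^'n^'n"
  assumes sym: "\<And>i j. A$i$j = A$j$i"
  shows "finite {\<mu>. \<exists>x::real^'n. x \<noteq> 0 \<and> A *v x = \<mu> *\<^sub>R x}" (is "finite ?S")
proof -
  define v where "v \<mu> = (SOME x. x \<noteq> 0 \<and> A *v x = \<mu> *\<^sub>R x)" for \<mu>
  have v: "v \<mu> \<noteq> 0 \<and> A *v v \<mu> = \<mu> *\<^sub>R v \<mu>" if "\<mu> \<in> ?S" for \<mu>
    using that unfolding v_def by (metis (mono_tags, lifting) mem_Collect_eq someI)
  have inj: "inj_on v ?S"
  proof
    fix a b assume ab: "a \<in> ?S" "b \<in> ?S" "v a = v b"
    have e1: "A *v v a = a *\<^sub>R v a" and nz: "v a \<noteq> 0" using v[OF ab(1)] by auto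
    have "A *v v b = b *\<^sub>R v b" using v[OF ab(2)] by auto
    then have "A *v v a = b *\<^sub>R v a" using ab(3) by metis
    then have "a *\<^sub>R v a = b *\<^sub>R v a" using e1 by metis
    then show "a = b" using nz by (metis scaleR_cancel_right)
  qed
  have "pairwise orthogonal (v ` ?S)" unfolding pairwise_def
  proof (intro ballI impI)
    fix p q assume pq: "p \<in> v ` ?S" "q \<in> v ` ?S" "p \<noteq> q"
    then obtain a b where ab: "a \<in> ?S" "b \<in> ?S" and pv: "p = v a" "q = v b" by blast
    then have "a \<noteq> b" using pq(3) by auto
    have "a * (v a \<bullet> v b) = (A *v v a) \<bullet> v b" using v[OF ab(1)] by simp
    also have "\<dots> = v a \<bullet> (A *v v b)" by (rule sym_dot[OF sym])
    also have "\<dots> = b * (v a \<bullet> v b)" using v[OF ab(2)] by simp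
    finally have "(a - b) * (v a \<bullet> v b) = 0" by (simp add: algebra_simps)
    then show "orthogonal p q" using \<open>a \<noteq> b\<close> pv by (simp add: orthogonal_def)
  qed
  then have "finite (v ` ?S)" by (rule pairwise_orthogonal_imp_finite)
  then show ?thesis using finite_imageD inj by blast
qed

lemma two_elems:
  assumes "CARD('n::finite) \<ge> 2"
  obtains a b :: "'n::finite" where "a \<noteq> b"
proof -
  have "\<exists>a b :: 'n. a \<noteq> b"
  proof (rule ccontr)
    assume "\<not> ?thesis"
    then have "(UNIV :: 'n set) = {undefined}" by auto
    then have "CARD('n) = 1" unfolding \<open>UNIV = {undefined}\<close> by simp
    then show False using assms by simp
  qed
  then show ?thesis using that by blast
qed

lemma exists_edge:
  fixes E :: "'n::finite \<Rightarrow> 'n \<Rightarrow> bool"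
  assumes "connected_graph E" "CARD('n) \<ge> 2"
  shows "\<exists>a b. E a b"
proof -
  obtain a b :: 'n where ab: "a \<noteq> b" using two_elems[OF assms(2)] by blast
  have w: "(E ^^ gdist E a b) a b" by (rule gdist_walk[OF assms(1)])
  have "gdist E a b \<ge> 1" by (rule gdist_pos[OF assms(1) ab])
  then obtain m where "gdist E a b = Suc m" by (metis Suc_le_D One_nat_def)
  then have "(E ^^ Suc m) a b" using w by simp
  then show ?thesis by (meson relpowp_Suc_E)
qed

lemma tr_pos:
  fixes E :: "'n::finite \<Rightarrow> 'n \<Rightarrow> bool"
  assumes "connected_graph E" "CARD('n) \<ge> 2"
  shows "transmission E u > 0"
proof -
  obtain a b :: 'n where ab: "a \<noteq> b" using two_elems[OF assms(2)] by blast
  obtain c where "c \<noteq> u" using ab by metis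
  then have "gdist E u c \<ge> 1" using gdist_pos[OF assms(1)] by metis
  moreover have "gdist E u c \<le> transmission E u"
    unfolding transmission_def by (rule member_le_sum) auto
  ultimately show ?thesis by simp
qed

lemma tr_sum_bound:
  fixes E :: "'n::finite \<Rightarrow> 'n \<Rightarrow> bool"
  assumes "simple_graph E" "connected_graph E"
  shows "CARD('n) * gdist E u v \<le> transmission E u + transmission E v"
proof -
  have h: "gdist E u v \<le> gdist E u w + gdist E v w" for w
      using gdist_tri[OF assms(2), of u v w] gdist_sym[OF assms, of w v] by simp
  have "(\<Sum>w\<in>(UNIV::'n set). gdist E u v) \<le> (\<Sum>w\<in>UNIV. gdist E u w + gdist E v w)"
    using sum_mono[where K=UNIV and f="\<lambda>w. gdist E u v" and g="\<lambda>w. gdist E u w + gdist E v w"] h by blast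
  then show ?thesis by (simp add: transmission_def sum.distrib)
qed

lemma gx_finite: "finite {\<bar>x u - x v\<bar> | u v. E u v}" for x :: "'n::finite \<Rightarrow> real"
proof -
  have "{\<bar>x u - x v\<bar> | u v. E u v} \<subseteq> (\<lambda>(u,v). \<bar>x u - x v\<bar>) ` UNIV" by auto
  then show ?thesis by (rule finite_subset) simp
qed

lemma gx_ge:
  fixes x :: "'n::finite \<Rightarrow> real"
  assumes "E a b" shows "\<bar>x a - x b\<bar> \<le> gamma_x E x"
  unfolding gamma_x_def by (rule Max_ge[OF gx_finite]) (use assms in blast)

lemma gx_le:
  fixes x :: "'n::finite \<Rightarrow> real"
  assumes "\<exists>a b. E a b" "\<And>a b. E a b \<Longrightarrow> \<bar>x a - x b\<bar> \<le> c"
  shows "gamma_x E x \<le> c"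
  unfolding gamma_x_def
proof (rule Max.boundedI[OF gx_finite])
  show "{\<bar>x u - x v\<bar> | u v. E u v} \<noteq> {}" using assms(1) by blast
  show "\<And>a. a \<in> {\<bar>x u - x v\<bar> | u v. E u v} \<Longrightarrow> a \<le> c" using assms(2) by blast
qed

lemma tr_real: "(\<Sum>v\<in>UNIV. real (gdist E u v) * g) = g * real (transmission E u)"
  by (simp add: transmission_def sum_distrib_left mult.commute)

lemma lower_bound:
  fixes E :: "'n::finite \<Rightarrow> 'n \<Rightarrow> bool"
  assumes "simple_graph E" "connected_graph E" "CARD('n) \<ge> 2"
    and tmax: "\<And>v. transmission E v \<le> transmission E u0"
    and x: "x \<in> feasible_vectors"
  shows "real CARD('n) / real (transmission E u0) \<le> gamma_x E x"
proof -
  define g where "g = gamma_x E x"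
  define T where "T = real (transmission E u0)"
  have Tpos: "T > 0" using tr_pos[OF assms(2,3)] by (simp add: T_def)
  obtain a b where "E a b" using exists_edge[OF assms(2,3)] by blast
  then have g0: "g \<ge> 0" using gx_ge[of E a b x] unfolding g_def by linarith
  have lip: "\<bar>x a - x b\<bar> \<le> real (gdist E a b) * g" for a b
    by (rule walk_lip[OF _ gdist_walk[OF assms(2)]]) (use gx_ge g_def in auto)
  have sx: "(\<Sum>v\<in>UNIV. x v) = 0" and sn: "Max (range (\<lambda>v. \<bar>x v\<bar>)) = 1"
    using x by (auto simp: feasible_vectors_def sup_norm_def)
  have "Max (range (\<lambda>v. \<bar>x v\<bar>)) \<in> range (\<lambda>v. \<bar>x v\<bar>)" by (rule Max_in) auto
  then obtain u where u: "\<bar>x u\<bar> = 1" using sn by auto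
  have "real CARD('n) \<le> g * real (transmission E u)"
  proof (cases "x u = 1")
    case True
    have "real CARD('n) = (\<Sum>v\<in>UNIV. 1 - x v)" using sx by (simp add: sum_subtractf)
    also have "\<dots> \<le> (\<Sum>v\<in>UNIV. real (gdist E u v) * g)"
    proof (rule sum_mono)
      fix v show "1 - x v \<le> real (gdist E u v) * g" using lip[of u v] True by simp
    qed
    finally show ?thesis by (simp add: tr_real)
  next
    case False
    then have xu: "x u = -1" using u by linarith
    have "real CARD('n) = (\<Sum>v\<in>UNIV. x v + 1)" using sx by (simp add: sum.distrib)
    also have "\<dots> \<le> (\<Sum>v\<in>UNIV. real (gdist E u v) * g)"
    proof (rule sum_mono)
      fix v show "x v + 1 \<le> real (gdist E u v) * g" using lip[of u v] xu by simp
    qed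
    finally show ?thesis by (simp add: tr_real)
  qed
  also have "\<dots> \<le> g * T" unfolding T_def using tmax[of u] g0 by (simp add: mult_left_mono)
  finally have "real CARD('n) \<le> g * T" .
  then show ?thesis using Tpos by (simp add: g_def T_def pos_divide_le_eq mult.commute)
qed

lemma upper_bound:
  fixes E :: "'n::finite \<Rightarrow> 'n \<Rightarrow> bool"
  assumes "simple_graph E" "connected_graph E" "CARD('n) \<ge> 2"
    and tmax: "\<And>v. transmission E v \<le> transmission E u0"
  defines "c \<equiv> real CARD('n) / real (transmission E u0)"
  defines "x0 \<equiv> (\<lambda>v. 1 - c * real (gdist E u0 v))"
  shows "x0 \<in> feasible_vectors" "gamma_x E x0 \<le> c"
proof -
  define T where "T = real (transmission E u0)"
  have Tpos: "T > 0" using tr_pos[OF assms(2,3)] by (simp add: T_def)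
  have cT: "c * T = real CARD('n)" using Tpos by (simp add: c_def T_def)
  have c0: "c \<ge> 0" by (simp add: c_def)
  have "(\<Sum>v\<in>UNIV. x0 v) = real CARD('n) - (\<Sum>v\<in>UNIV. real (gdist E u0 v) * c)"
    by (simp add: x0_def sum_subtractf mult.commute)
  also have "\<dots> = 0" using cT tr_real[of E u0 c] by (simp add: T_def)
  finally have s0: "(\<Sum>v\<in>UNIV. x0 v) = 0" .
  have bnd: "\<bar>x0 v\<bar> \<le> 1" for v
  proof -
    have "real (CARD('n) * gdist E u0 v) \<le> real (transmission E u0 + transmission E v)"
      using tr_sum_bound[OF assms(1,2), of u0 v] by linarith
    then have "real CARD('n) * real (gdist E u0 v) \<le> 2 * T"
      using tmax[of v] by (simp add: T_def)
    then have "c * T * real (gdist E u0 v) \<le> 2 * T" using cT by simp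
    then have "c * real (gdist E u0 v) \<le> 2" using Tpos by (simp add: mult.commute mult.left_commute)
    moreover have "c * real (gdist E u0 v) \<ge> 0" using c0 by simp
    ultimately show ?thesis by (simp add: x0_def)
  qed
  have "Max (range (\<lambda>v. \<bar>x0 v\<bar>)) = 1"
  proof (rule Max_eqI)
    show "finite (range (\<lambda>v. \<bar>x0 v\<bar>))" by simp
    show "\<And>y. y \<in> range (\<lambda>v. \<bar>x0 v\<bar>) \<Longrightarrow> y \<le> 1" using bnd by auto
    have "\<bar>x0 u0\<bar> = 1" by (simp add: x0_def)
    then show "1 \<in> range (\<lambda>v. \<bar>x0 v\<bar>)" by (metis rangeI)
  qed
  then show "x0 \<in> feasible_vectors" using s0 by (simp add: feasible_vectors_def sup_norm_def)
  show "gamma_x E x0 \<le> c"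
  proof (rule gx_le[OF exists_edge[OF assms(2,3)]])
    fix a b assume ab: "E a b"
    have "real (gdist E u0 b) \<le> real (gdist E u0 a) + 1" "real (gdist E u0 a) \<le> real (gdist E u0 b) + 1"
      using gdist_edge[OF assms(1,2) ab, of u0] by linarith+
    then have "\<bar>real (gdist E u0 a) - real (gdist E u0 b)\<bar> \<le> 1" by linarith
    then have "c * \<bar>real (gdist E u0 a) - real (gdist E u0 b)\<bar> \<le> c * 1" using c0 by (rule mult_left_mono)
    moreover have "\<bar>x0 a - x0 b\<bar> = c * \<bar>real (gdist E u0 a) - real (gdist E u0 b)\<bar>"
      using c0 by (simp add: x0_def abs_mult right_diff_distrib[symmetric] abs_minus_commute)
    ultimately show "\<bar>x0 a - x0 b\<bar> \<le> c" by simp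
  qed
qed

lemma max_abs_comp:
  fixes y :: "real^'n::finite"
  obtains w where "\<And>v. \<bar>y$v\<bar> \<le> \<bar>y$w\<bar>"
proof -
  have "Max (range (\<lambda>v. \<bar>y$v\<bar>)) \<in> range (\<lambda>v. \<bar>y$v\<bar>)" by (rule Max_in) auto
  then obtain w where w: "\<bar>y$w\<bar> = Max (range (\<lambda>v. \<bar>y$v\<bar>))" by (metis (no_types, lifting) rangeE)
  have "\<bar>y$v\<bar> \<le> \<bar>y$w\<bar>" for v unfolding w by (rule Max_ge) auto
  then show ?thesis using that by blast
qed

lemma eig_row:
  fixes E :: "'n::finite \<Rightarrow> 'n \<Rightarrow> bool"
  assumes "distance_matrix E *v y = \<mu> *\<^sub>R y"
  shows "(\<Sum>v\<in>UNIV. real (gdist E u v) * y$v) = \<mu> * y$u"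
proof -
  have "(distance_matrix E *v y)$u = (\<mu> *\<^sub>R y)$u" using assms by simp
  then show ?thesis by (simp add: matrix_vector_mult_def distance_matrix_def)
qed

lemma eig_chain:
  fixes E :: "'n::finite \<Rightarrow> 'n \<Rightarrow> bool"
  assumes ev: "distance_matrix E *v y = \<mu> *\<^sub>R y"
    and M: "\<And>v. \<bar>y$v\<bar> \<le> M"
  shows "\<bar>\<mu>\<bar> * \<bar>y$u\<bar> \<le> (\<Sum>v\<in>UNIV. real (gdist E u v) * \<bar>y$v\<bar>)"
    and "(\<Sum>v\<in>UNIV. real (gdist E u v) * \<bar>y$v\<bar>) \<le> M * real (transmission E u)"
proof -
  have "\<bar>\<mu>\<bar> * \<bar>y$u\<bar> = \<bar>\<Sum>v\<in>UNIV. real (gdist E u v) * y$v\<bar>"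
    using eig_row[OF ev, of u] by (simp add: abs_mult)
  also have "\<dots> \<le> (\<Sum>v\<in>UNIV. \<bar>real (gdist E u v) * y$v\<bar>)" by (rule sum_abs)
  also have "\<dots> = (\<Sum>v\<in>UNIV. real (gdist E u v) * \<bar>y$v\<bar>)" by (simp add: abs_mult)
  finally show "\<bar>\<mu>\<bar> * \<bar>y$u\<bar> \<le> (\<Sum>v\<in>UNIV. real (gdist E u v) * \<bar>y$v\<bar>)" .
  have "(\<Sum>v\<in>UNIV. real (gdist E u v) * \<bar>y$v\<bar>) \<le> (\<Sum>v\<in>UNIV. real (gdist E u v) * M)"
    by (rule sum_mono) (simp add: M mult_left_mono)
  also have "\<dots> = M * real (transmission E u)" by (rule tr_real)
  finally show "(\<Sum>v\<in>UNIV. real (gdist E u v) * \<bar>y$v\<bar>) \<le> M * real (transmission E u)" .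
qed

lemma eig_bound:
  fixes E :: "'n::finite \<Rightarrow> 'n \<Rightarrow> bool"
  assumes tmax: "\<And>v. transmission E v \<le> transmission E u0"
    and ev: "distance_matrix E *v y = \<mu> *\<^sub>R y" and nz: "y \<noteq> 0"
  shows "\<mu> \<le> real (transmission E u0)"
proof -
  obtain w where w: "\<And>v. \<bar>y$v\<bar> \<le> \<bar>y$w\<bar>" using max_abs_comp by blast
  define M where "M = \<bar>y$w\<bar>"
  obtain i where "y$i \<noteq> 0" using nz by (metis vec_eq_iff zero_index)
  then have Mpos: "M > 0" using w[of i] unfolding M_def by linarith
  have "\<bar>\<mu>\<bar> * M \<le> M * real (transmission E w)"
    using eig_chain[OF ev, of M w] w unfolding M_def by fastforce
  also have "\<dots> \<le> M * real (transmission E u0)" using tmax[of w] Mpos by simp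
  finally have "\<bar>\<mu>\<bar> \<le> real (transmission E u0)" using Mpos by (simp add: mult.commute)
  then show ?thesis by linarith
qed

lemma eig_reg:
  fixes E :: "'n::finite \<Rightarrow> 'n \<Rightarrow> bool"
  assumes conn: "connected_graph E" and tmax: "\<And>v. transmission E v \<le> transmission E u0"
    and ev: "distance_matrix E *v y = real (transmission E u0) *\<^sub>R y" and nz: "y \<noteq> 0"
  shows "transmission_regular E"
proof -
  define T where "T = real (transmission E u0)"
  have T0: "T \<ge> 0" by (simp add: T_def)
  obtain w where w: "\<And>v. \<bar>y$v\<bar> \<le> \<bar>y$w\<bar>" using max_abs_comp by blast
  define M where "M = \<bar>y$w\<bar>"
  have Mb: "\<And>v. \<bar>y$v\<bar> \<le> M" using w unfolding M_def by blast
  obtain i where "y$i \<noteq> 0" using nz by (metis vec_eq_iff zero_index)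
  then have Mpos: "M > 0" using w[of i] unfolding M_def by linarith
  have c1: "T * M \<le> (\<Sum>v\<in>UNIV. real (gdist E w v) * \<bar>y$v\<bar>)"
    using eig_chain(1)[OF ev[folded T_def] Mb, of w] T0 unfolding M_def by simp
  have "(\<Sum>v\<in>UNIV. real (gdist E w v) * M) = M * real (transmission E w)" by (rule tr_real)
  also have "\<dots> \<le> M * T" using tmax[of w] Mpos by (simp add: T_def)
  finally have c2: "(\<Sum>v\<in>UNIV. real (gdist E w v) * M) \<le> T * M" by (simp add: mult.commute)
  have "(\<Sum>v\<in>UNIV. real (gdist E w v) * M - real (gdist E w v) * \<bar>y$v\<bar>) =
        (\<Sum>v\<in>UNIV. real (gdist E w v) * M) - (\<Sum>v\<in>UNIV. real (gdist E w v) * \<bar>y$v\<bar>)"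
    by (rule sum_subtractf)
  also have "\<dots> \<le> 0" using c1 c2 by linarith
  finally have sle: "(\<Sum>v\<in>UNIV. real (gdist E w v) * M - real (gdist E w v) * \<bar>y$v\<bar>) \<le> 0" .
  have tnn: "\<And>v. real (gdist E w v) * M - real (gdist E w v) * \<bar>y$v\<bar> \<ge> 0"
    using Mb by (simp add: mult_left_mono)
  have "(\<Sum>v\<in>UNIV. real (gdist E w v) * M - real (gdist E w v) * \<bar>y$v\<bar>) = 0"
    using sle tnn by (meson antisym sum_nonneg)
  then have zero: "\<And>v. real (gdist E w v) * M - real (gdist E w v) * \<bar>y$v\<bar> = 0"
    using tnn by (subst (asm) sum_nonneg_eq_0_iff) auto
  have allM: "\<bar>y$v\<bar> = M" for v
  proof (cases "v = w")
    case True then show ?thesis by (simp add: M_def)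
  next
    case False
    then have "gdist E w v \<ge> 1" using gdist_pos[OF conn] by metis
    then have "real (gdist E w v) \<noteq> 0" by simp
    moreover have "real (gdist E w v) * (M - \<bar>y$v\<bar>) = 0" using zero[of v] by (simp add: right_diff_distrib)
    ultimately show ?thesis by simp
  qed
  have treq: "transmission E v = transmission E u0" for v
  proof -
    have "T * M \<le> M * real (transmission E v)"
      using eig_chain[OF ev[folded T_def] Mb, of v] T0 allM[of v] by simp
    then have "T \<le> real (transmission E v)" using Mpos by (simp add: mult.commute)
    then show ?thesis using tmax[of v] unfolding T_def by linarith
  qed
  show ?thesis unfolding transmission_regular_def by (metis treq)
qed

theorem theorem4p1:
  fixes E :: "'n::finite \<Rightarrow> 'n \<Rightarrow> bool"
  assumes "simple_graph E" and "connected_graph E" and "CARD('n) \<ge> 2"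
  shows "gamma E \<le> real CARD('n) / dist_spectral_radius E
         \<and> (gamma E = real CARD('n) / dist_spectral_radius E \<longleftrightarrow> transmission_regular E)"
proof -
  have "Max (range (transmission E)) \<in> range (transmission E)" by (rule Max_in) auto
  then obtain u0 where u0: "transmission E u0 = Max (range (transmission E))" by (metis rangeE)
  have tmax: "\<And>v. transmission E v \<le> transmission E u0" unfolding u0 by (rule Max_ge) auto
  define T where "T = real (transmission E u0)"
  define c where "c = real CARD('n) / T"
  have Tpos: "T > 0" using tr_pos[OF assms(2,3)] by (simp add: T_def)
  define D where "D = distance_matrix E"
  have sym: "\<And>i j. D$i$j = D$j$i" by (simp add: D_def distance_matrix_def gdist_sym[OF assms(1,2)])
  define S where "S = {\<mu>. \<exists>x::real^'n. x \<noteq> 0 \<and> D *v x = \<mu> *\<^sub>R x}"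
  have rho: "dist_spectral_radius E = Max S" by (simp add: dist_spectral_radius_def S_def D_def)
  have finS: "finite S" unfolding S_def by (rule sym_eig_finite[OF sym])
  obtain l x where lx: "x \<noteq> 0" "D *v x = l *\<^sub>R x" "\<And>y. y \<bullet> (D *v y) \<le> l * (norm y)^2"
    using sym_max_eig[OF sym] by blast
  have lS: "l \<in> S" using lx unfolding S_def by blast
  define one :: "real^'n" where "one = (\<chi> i. 1)"
  have o1: "one$i = 1" for i by (simp add: one_def)
  have Done: "(D *v one)$u = real (transmission E u)" for u
    by (simp add: D_def one_def matrix_vector_mult_def distance_matrix_def transmission_def)
  have "one \<bullet> (D *v one) = (\<Sum>u\<in>UNIV. real (transmission E u))"
    by (simp add: inner_vec_def Done o1)
  also have "\<dots> \<ge> T" unfolding T_def by (rule member_le_sum) auto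
  finally have "l * (norm one)^2 > 0" using lx(3)[of one] Tpos by linarith
  then have lpos: "l > 0" by (metis zero_le_power2 mult_nonpos_nonneg not_le)
  define \<rho> where "\<rho> = dist_spectral_radius E"
  have rhoS: "\<rho> \<in> S" unfolding \<rho>_def rho using finS lS by (intro Max_in) auto
  have "l \<le> \<rho>" unfolding \<rho>_def rho using finS lS by (intro Max_ge)
  then have rpos: "\<rho> > 0" using lpos by linarith
  have rT: "\<rho> \<le> T" using rhoS eig_bound[OF tmax] unfolding S_def T_def D_def by blast
  have x0: "(\<lambda>v. 1 - c * real (gdist E u0 v)) \<in> feasible_vectors"
    "gamma_x E (\<lambda>v. 1 - c * real (gdist E u0 v)) \<le> c"
    using upper_bound[OF assms tmax] unfolding c_def T_def by auto
  obtain a b where ab: "E a b" using exists_edge[OF assms(2,3)] by blast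
  have bdd: "bdd_below (gamma_x E ` feasible_vectors)"
  proof (rule bdd_belowI)
    fix g assume "g \<in> gamma_x E ` feasible_vectors"
    then obtain y where "g = gamma_x E y" by blast
    then show "0 \<le> g" using gx_ge[where E=E and a=a and b=b and x=y] ab by linarith
  qed
  have gle: "gamma E \<le> c"
  proof -
    have "gamma E \<le> gamma_x E (\<lambda>v. 1 - c * real (gdist E u0 v))"
      unfolding gamma_def using x0(1) bdd by (intro cInf_lower) auto
    then show ?thesis using x0(2) by linarith
  qed
  have cle: "c \<le> real CARD('n) / \<rho>" unfolding c_def using rpos rT
    by (intro frac_le) auto
  have part1: "gamma E \<le> real CARD('n) / \<rho>" using gle cle by linarith
  have part2: "gamma E = real CARD('n) / \<rho> \<longleftrightarrow> transmission_regular E"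
  proof
    assume "gamma E = real CARD('n) / \<rho>"
    then have "real CARD('n) / T = real CARD('n) / \<rho>" using gle cle unfolding c_def by linarith
    then have "T = \<rho>" using assms(3) by (simp add: divide_cancel_left)
    then have "T \<in> S" using rhoS by simp
    then show "transmission_regular E" using eig_reg[OF assms(2) tmax] unfolding S_def T_def D_def by blast
  next
    assume reg: "transmission_regular E"
    have "D *v one = T *\<^sub>R one"
      unfolding vec_eq_iff using reg by (simp add: Done T_def o1 transmission_regular_def)
    moreover have "one \<noteq> 0" by (simp add: one_def vec_eq_iff)
    ultimately have "T \<in> S" unfolding S_def by blast
    then have "T \<le> \<rho>" unfolding \<rho>_def rho using finS by (intro Max_ge)
    then have rhoT: "\<rho> = T" using rT by linarith
    have "c \<le> gamma E" unfolding gamma_def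
    proof (rule cInf_greatest)
      show "gamma_x E ` feasible_vectors \<noteq> {}" using x0(1) by blast
      fix g assume "g \<in> gamma_x E ` feasible_vectors"
      then obtain y where "y \<in> feasible_vectors" "g = gamma_x E y" by blast
      then show "c \<le> g" using lower_bound[OF assms tmax] unfolding c_def T_def by blast
    qed
    then show "gamma E = real CARD('n) / \<rho>" using gle rhoT unfolding c_def by simp
  qed
  show ?thesis using part1 part2 unfolding \<rho>_def by blast
qed

end
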